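(* Let $A$ be a commutative ring, $\sigma$ a hereditary torsion theory on $A$-modules, $\mathfrak{a}\subseteq A$ an ideal and $p:A\to A/\mathfrak{a}$ the canonical projection. Then $A$ is totally $\sigma$-artinian if and only if $\mathfrak{a}$ is a totally $\sigma$-artinian $A$-module and $A/\mathfrak{a}$ is a totally $\sigma$-artinian $A$-module (equivalently, the ring $A/\mathfrak{a}$ is totally $p(\sigma)$-artinian).
   Context: $\mathcal{L}(\sigma)$ is the Gabriel filter of $\sigma$. An $A$-module $M$ is totally $\sigma$-artinian if for every descending chain of submodules $N_1\supseteq N_2\supseteq\cdots$ there exist $m$ and $\mathfrak{h}\in\mathcal{L}(\sigma)$ with $N_m\mathfrak{h}\subseteq N_s$ for all $s\ge m$; the ring $A$ is totally $\sigma$-artinian if $A$ is so as an $A$-module. $p(\sigma)$ is the hereditary torsion theory on $A/\mathfrak{a}$-modules with Gabriel filter $\{\mathfrak{b}: p^{-1}(\mathfrak{b})\in\mathcal{L}(\sigma)\}$, and the ring $A/\mathfrak{a}$ is totally $p(\sigma)$-artinian if the analogous chain condition holds for its ideals with $\mathfrak{h}\in\mathcal{L}(p(\sigma))$. *)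

theory Defs
  imports "HOL-Algebra.Algebra"
begin

definition colon_ideal :: "('a, 'b) ring_scheme \<Rightarrow> 'a set \<Rightarrow> 'a \<Rightarrow> 'a set" where
  "colon_ideal R J r = {x \<in> carrier R. x \<otimes>\<^bsub>R\<^esub> r \<in> J}"

text \<open>Gabriel filter (= hereditary torsion theory) on a commutative ring R, as a set of ideals.\<close>
definition gabriel_filter :: "('a, 'b) ring_scheme \<Rightarrow> 'a set set \<Rightarrow> bool" where
  "gabriel_filter R L \<longleftrightarrow>
     (\<forall>J\<in>L. ideal J R) \<and>
     carrier R \<in> L \<and>
     (\<forall>J\<in>L. \<forall>K. ideal K R \<and> J \<subseteq> K \<longrightarrow> K \<in> L) \<and>
     (\<forall>J\<in>L. \<forall>K\<in>L. J \<inter> K \<in> L) \<and>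
     (\<forall>J\<in>L. \<forall>r\<in>carrier R. colon_ideal R J r \<in> L) \<and>
     (\<forall>K J. ideal K R \<and> J \<in> L \<and> (\<forall>r\<in>J. colon_ideal R K r \<in> L) \<longrightarrow> K \<in> L)"

definition submod_ideal_prod ::
  "('a, 'c) ring_scheme \<Rightarrow> ('a, 'b) module \<Rightarrow> 'b set \<Rightarrow> 'a set \<Rightarrow> 'b set" where
  "submod_ideal_prod R M N h =
     \<Inter> {K. submodule K R M \<and> (\<forall>a\<in>h. \<forall>x\<in>N. a \<odot>\<^bsub>M\<^esub> x \<in> K)}"

definition totally_sigma_artinian ::
  "('a, 'c) ring_scheme \<Rightarrow> 'a set set \<Rightarrow> ('a, 'b) module \<Rightarrow> bool" where
  "totally_sigma_artinian R L M \<longleftrightarrow>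
     (\<forall>N :: nat \<Rightarrow> 'b set.
        (\<forall>n. submodule (N n) R M) \<and> (\<forall>n. N (Suc n) \<subseteq> N n) \<longrightarrow>
        (\<exists>m. \<exists>h\<in>L. \<forall>s\<ge>m. submod_ideal_prod R M (N m) h \<subseteq> N s))"

definition ring_module :: "('a, 'c) ring_scheme \<Rightarrow> ('a, 'a) module" where
  "ring_module R = \<lparr>carrier = carrier R, monoid.mult = monoid.mult R, one = monoid.one R,
     ring.zero = ring.zero R, ring.add = ring.add R, smult = monoid.mult R\<rparr>"

definition ideal_module :: "('a, 'c) ring_scheme \<Rightarrow> 'a set \<Rightarrow> ('a, 'a) module" where
  "ideal_module R I = (ring_module R)\<lparr>carrier := I\<rparr>"

definition quot_smult :: "('a, 'c) ring_scheme \<Rightarrow> 'a set \<Rightarrow> 'a \<Rightarrow> 'a set \<Rightarrow> 'a set" where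
  "quot_smult R I r C = monoid.mult (R Quot I) (a_r_coset R I r) C"

definition quotient_module :: "('a, 'c) ring_scheme \<Rightarrow> 'a set \<Rightarrow> ('a, 'a set) module" where
  "quotient_module R I = \<lparr>carrier = carrier (R Quot I), monoid.mult = monoid.mult (R Quot I),
     one = monoid.one (R Quot I), ring.zero = ring.zero (R Quot I), ring.add = ring.add (R Quot I),
     smult = quot_smult R I\<rparr>"

definition proj_filter :: "('a, 'c) ring_scheme \<Rightarrow> 'a set \<Rightarrow> 'a set set \<Rightarrow> 'a set set set" where
  "proj_filter R I L =
     {B. ideal B (R Quot I) \<and> {x \<in> carrier R. I +>\<^bsub>R\<^esub> x \<in> B} \<in> L}"

end

theory Submission
  imports Defs
begin

lemma smult_ring_module[simp]: "smult (ring_module R) a x = a \<otimes>\<^bsub>R\<^esub> x"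
  by (simp add: ring_module_def)

lemma smult_ideal_module[simp]: "smult (ideal_module R I) a x = a \<otimes>\<^bsub>R\<^esub> x"
  by (simp add: ideal_module_def ring_module_def)

lemma smult_quot_module[simp]:
  "smult (quotient_module R I) a C = (I +>\<^bsub>R\<^esub> a) \<otimes>\<^bsub>(R Quot I)\<^esub> C"
  by (simp add: quotient_module_def quot_smult_def)

lemma subgroup_cong:
  "carrier G = carrier G' \<Longrightarrow> monoid.mult G = monoid.mult G' \<Longrightarrow> one G = one G'
   \<Longrightarrow> subgroup H G \<longleftrightarrow> subgroup H G'"
  unfolding subgroup_def m_inv_def by simp

lemma sub_prod_iff:
  assumes "submodule K R M"
  shows "submod_ideal_prod R M N h \<subseteq> K \<longleftrightarrow> (\<forall>a\<in>h. \<forall>x\<in>N. a \<odot>\<^bsub>M\<^esub> x \<in> K)"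
  unfolding submod_ideal_prod_def using assms by blast

lemma tsa_iff:
  "totally_sigma_artinian R L M \<longleftrightarrow>
     (\<forall>N :: nat \<Rightarrow> _ set.
        (\<forall>n. submodule (N n) R M) \<and> (\<forall>n. N (Suc n) \<subseteq> N n) \<longrightarrow>
        (\<exists>m. \<exists>h\<in>L. \<forall>s\<ge>m. \<forall>a\<in>h. \<forall>x\<in>N m. a \<odot>\<^bsub>M\<^esub> x \<in> N s))"
proof -
  have e: "(\<forall>s\<ge>m. submod_ideal_prod R M (N m) h \<subseteq> N s) \<longleftrightarrow>
           (\<forall>s\<ge>m. \<forall>a\<in>h. \<forall>x\<in>N m. a \<odot>\<^bsub>M\<^esub> x \<in> N s)"
    if "\<forall>n. submodule (N n) R M" for N :: "nat \<Rightarrow> _ set" and m h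
    using sub_prod_iff[of "N _" R M "N m" h] that by blast
  show ?thesis
  proof (intro iffI allI impI)
    fix N :: "nat \<Rightarrow> _ set"
    assume T: "totally_sigma_artinian R L M" and c: "(\<forall>n. submodule (N n) R M) \<and> (\<forall>n. N (Suc n) \<subseteq> N n)"
    then obtain m h where "h \<in> L" "\<forall>s\<ge>m. submod_ideal_prod R M (N m) h \<subseteq> N s"
      unfolding totally_sigma_artinian_def by blast
    then show "\<exists>m. \<exists>h\<in>L. \<forall>s\<ge>m. \<forall>a\<in>h. \<forall>x\<in>N m. a \<odot>\<^bsub>M\<^esub> x \<in> N s"
      using e[of N m h] c by blast
  next
    assume T: "\<forall>N :: nat \<Rightarrow> _ set.
        (\<forall>n. submodule (N n) R M) \<and> (\<forall>n. N (Suc n) \<subseteq> N n) \<longrightarrow>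
        (\<exists>m. \<exists>h\<in>L. \<forall>s\<ge>m. \<forall>a\<in>h. \<forall>x\<in>N m. a \<odot>\<^bsub>M\<^esub> x \<in> N s)"
    show "totally_sigma_artinian R L M" unfolding totally_sigma_artinian_def
    proof (intro allI impI)
      fix N :: "nat \<Rightarrow> _ set"
      assume c: "(\<forall>n. submodule (N n) R M) \<and> (\<forall>n. N (Suc n) \<subseteq> N n)"
      then obtain m h where "h \<in> L" "\<forall>s\<ge>m. \<forall>a\<in>h. \<forall>x\<in>N m. a \<odot>\<^bsub>M\<^esub> x \<in> N s"
        using T by blast
      then show "\<exists>m. \<exists>h\<in>L. \<forall>s\<ge>m. submod_ideal_prod R M (N m) h \<subseteq> N s"
        using e[of N m h] c by blast
    qed
  qed
qed

lemma cring_ideal_iff: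
  assumes "cring R"
  shows "ideal H R \<longleftrightarrow> subgroup H (add_monoid R) \<and> (\<forall>a\<in>carrier R. \<forall>x\<in>H. a \<otimes>\<^bsub>R\<^esub> x \<in> H)"
proof -
  interpret cring R by fact
  show ?thesis
  proof
    assume "ideal H R"
    then show "subgroup H (add_monoid R) \<and> (\<forall>a\<in>carrier R. \<forall>x\<in>H. a \<otimes>\<^bsub>R\<^esub> x \<in> H)"
      by (simp add: additive_subgroup.a_subgroup ideal.axioms(1) ideal.I_l_closed)
  next
    assume A: "subgroup H (add_monoid R) \<and> (\<forall>a\<in>carrier R. \<forall>x\<in>H. a \<otimes>\<^bsub>R\<^esub> x \<in> H)"
    have sub: "H \<subseteq> carrier R" using subgroup.subset[of H "add_monoid R"] A by simp
    show "ideal H R"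
    proof (rule idealI)
      show "ring R" by (rule ring_axioms)
      show "subgroup H (add_monoid R)" using A by blast
      show "\<And>a x. a \<in> H \<Longrightarrow> x \<in> carrier R \<Longrightarrow> x \<otimes>\<^bsub>R\<^esub> a \<in> H" using A by blast
    next
      fix a x assume a: "a \<in> H" and x: "x \<in> carrier R"
      have "a \<otimes>\<^bsub>R\<^esub> x = x \<otimes>\<^bsub>R\<^esub> a" using m_comm[of a x] a x sub by blast
      then show "a \<otimes>\<^bsub>R\<^esub> x \<in> H" using A a x by simp
    qed
  qed
qed

lemma submod_ring_iff:
  assumes "cring R"
  shows "submodule H R (ring_module R) \<longleftrightarrow> ideal H R"
proof -
  have eq: "subgroup H (add_monoid (ring_module R)) \<longleftrightarrow> subgroup H (add_monoid R)"
    by (rule subgroup_cong) (simp_all add: ring_module_def)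
  have sm: "(\<forall>a x. a \<in> carrier R \<longrightarrow> x \<in> H \<longrightarrow> a \<otimes>\<^bsub>R\<^esub> x \<in> H) \<longleftrightarrow> (\<forall>a\<in>carrier R. \<forall>x\<in>H. a \<otimes>\<^bsub>R\<^esub> x \<in> H)"
    by blast
  show ?thesis
    unfolding submodule_def submodule_axioms_def cring_ideal_iff[OF assms] eq smult_ring_module sm ..
qed

lemma submod_ideal_iff:
  assumes "cring R" "ideal I R"
  shows "submodule H R (ideal_module R I) \<longleftrightarrow> ideal H R \<and> H \<subseteq> I"
proof -
  interpret cring R by fact
  have sI: "subgroup I (add_monoid R)"
    using assms(2) by (simp add: additive_subgroup.a_subgroup ideal.axioms(1))
  have "subgroup H (add_monoid (ideal_module R I)) \<longleftrightarrow> subgroup H ((add_monoid R)\<lparr>carrier := I\<rparr>)"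
    by (rule subgroup_cong) (simp_all add: ideal_module_def ring_module_def)
  also have "\<dots> \<longleftrightarrow> subgroup H (add_monoid R) \<and> H \<subseteq> I"
  proof
    assume h: "subgroup H ((add_monoid R)\<lparr>carrier := I\<rparr>)"
    then have "H \<subseteq> I" using subgroup.subset[OF h] by simp
    then show "subgroup H (add_monoid R) \<and> H \<subseteq> I"
      using add.incl_subgroup[OF sI h] by blast
  next
    assume a: "subgroup H (add_monoid R) \<and> H \<subseteq> I"
    then show "subgroup H ((add_monoid R)\<lparr>carrier := I\<rparr>)"
      using add.subgroup_incl[of H I] sI by blast
  qed
  finally have eq: "subgroup H (add_monoid (ideal_module R I)) \<longleftrightarrow> subgroup H (add_monoid R) \<and> H \<subseteq> I" .
  have sm: "(\<forall>a x. a \<in> carrier R \<longrightarrow> x \<in> H \<longrightarrow> a \<otimes>\<^bsub>R\<^esub> x \<in> H) \<longleftrightarrow> (\<forall>a\<in>carrier R. \<forall>x\<in>H. a \<otimes>\<^bsub>R\<^esub> x \<in> H)"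
    by blast
  show ?thesis
    unfolding submodule_def submodule_axioms_def cring_ideal_iff[OF assms(1)] smult_ideal_module sm eq
    by blast
qed

lemma Q_carrier: "carrier (R Quot I) = (\<lambda>x. I +>\<^bsub>R\<^esub> x) ` carrier R"
  by (auto simp add: FactRing_def A_RCOSETS_def RCOSETS_def a_r_coset_def)

lemma Q_mult:
  assumes "ideal I R" "a \<in> carrier R" "b \<in> carrier R"
  shows "(I +>\<^bsub>R\<^esub> a) \<otimes>\<^bsub>(R Quot I)\<^esub> (I +>\<^bsub>R\<^esub> b) = I +>\<^bsub>R\<^esub> (a \<otimes>\<^bsub>R\<^esub> b)"
  using ideal.rcoset_mult_add[OF assms] by (simp add: FactRing_def)

lemma submod_quot_iff:
  assumes "cring R" "ideal I R"
  shows "submodule H R (quotient_module R I) \<longleftrightarrow> ideal H (R Quot I)"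
proof -
  have cQ: "cring (R Quot I)" using ideal.quotient_is_cring[OF assms(2,1)] .
  have eq: "subgroup H (add_monoid (quotient_module R I)) \<longleftrightarrow> subgroup H (add_monoid (R Quot I))"
    by (rule subgroup_cong) (simp_all add: quotient_module_def)
  have eq2: "(\<forall>a x. a \<in> carrier R \<longrightarrow> x \<in> H \<longrightarrow> (I +>\<^bsub>R\<^esub> a) \<otimes>\<^bsub>(R Quot I)\<^esub> x \<in> H)
     \<longleftrightarrow> (\<forall>b\<in>carrier (R Quot I). \<forall>x\<in>H. b \<otimes>\<^bsub>(R Quot I)\<^esub> x \<in> H)"
    unfolding Q_carrier by blast
  show ?thesis
    unfolding submodule_def submodule_axioms_def cring_ideal_iff[OF cQ] eq
    by (simp only: smult_quot_module eq2)
qed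


lemma colon_is_ideal:
  assumes "cring R" "ideal K R" "r \<in> carrier R"
  shows "ideal (colon_ideal R K r) R"
proof -
  interpret R: cring R by fact
  have KR: "K \<subseteq> carrier R" using assms(2) by (simp add: additive_subgroup.a_subset ideal.axioms(1))
  have sg: "subgroup (colon_ideal R K r) (add_monoid R)"
  proof (rule R.add.subgroupI)
    show "colon_ideal R K r \<subseteq> carrier R" unfolding colon_ideal_def by auto
    have "\<zero>\<^bsub>R\<^esub> \<in> colon_ideal R K r" unfolding colon_ideal_def
      using assms by (simp add: additive_subgroup.zero_closed ideal.axioms(1))
    then show "colon_ideal R K r \<noteq> {}" by blast
  next
    fix a assume a: "a \<in> colon_ideal R K r"
    then have ac: "a \<in> carrier R" "a \<otimes>\<^bsub>R\<^esub> r \<in> K" unfolding colon_ideal_def by auto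
    have "(\<ominus>\<^bsub>R\<^esub> a) \<otimes>\<^bsub>R\<^esub> r = \<ominus>\<^bsub>R\<^esub> (a \<otimes>\<^bsub>R\<^esub> r)" using ac assms(3) by (simp add: R.l_minus)
    moreover have "\<ominus>\<^bsub>R\<^esub> (a \<otimes>\<^bsub>R\<^esub> r) \<in> K" using ac assms(2)
      by (simp add: additive_subgroup.a_inv_closed ideal.axioms(1))
    ultimately show "\<ominus>\<^bsub>R\<^esub> a \<in> colon_ideal R K r"
      unfolding colon_ideal_def using ac by simp
  next
    fix a b assume "a \<in> colon_ideal R K r" "b \<in> colon_ideal R K r"
    then have ac: "a \<in> carrier R" "a \<otimes>\<^bsub>R\<^esub> r \<in> K" "b \<in> carrier R" "b \<otimes>\<^bsub>R\<^esub> r \<in> K"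
      unfolding colon_ideal_def by auto
    have "(a \<oplus>\<^bsub>R\<^esub> b) \<otimes>\<^bsub>R\<^esub> r = a \<otimes>\<^bsub>R\<^esub> r \<oplus>\<^bsub>R\<^esub> b \<otimes>\<^bsub>R\<^esub> r"
      using ac assms(3) by (simp add: R.l_distr)
    moreover have "a \<otimes>\<^bsub>R\<^esub> r \<oplus>\<^bsub>R\<^esub> b \<otimes>\<^bsub>R\<^esub> r \<in> K" using ac assms(2)
      by (simp add: additive_subgroup.a_closed ideal.axioms(1))
    ultimately show "a \<oplus>\<^bsub>R\<^esub> b \<in> colon_ideal R K r"
      unfolding colon_ideal_def using ac by simp
  qed
  show ?thesis unfolding cring_ideal_iff[OF assms(1)]
  proof (intro conjI sg ballI)
    fix a x assume a: "a \<in> carrier R" and x: "x \<in> colon_ideal R K r"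
    then have xc: "x \<in> carrier R" "x \<otimes>\<^bsub>R\<^esub> r \<in> K" unfolding colon_ideal_def by auto
    have eq: "(a \<otimes>\<^bsub>R\<^esub> x) \<otimes>\<^bsub>R\<^esub> r = a \<otimes>\<^bsub>R\<^esub> (x \<otimes>\<^bsub>R\<^esub> r)"
      using R.m_assoc a xc(1) assms(3) by blast
    have mem: "a \<otimes>\<^bsub>R\<^esub> (x \<otimes>\<^bsub>R\<^esub> r) \<in> K"
      using ideal.I_l_closed[OF assms(2) xc(2) a] .
    have c: "a \<otimes>\<^bsub>R\<^esub> x \<in> carrier R" using R.m_closed a xc(1) by blast
    show "a \<otimes>\<^bsub>R\<^esub> x \<in> colon_ideal R K r"
      unfolding colon_ideal_def by (simp only: mem_Collect_eq eq c mem simp_thms)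
  qed
qed

lemma chain_le:
  assumes "\<forall>n. N (Suc n) \<subseteq> (N n :: 'b set)" "m \<le> s"
  shows "N s \<subseteq> N m"
proof (rule lift_Suc_antimono_le[of N])
  show "\<And>n. N (Suc n) \<subseteq> N n" using assms(1) by blast
qed (rule assms(2))

theorem mainTheorem11:
  fixes R :: "('a, 'c) ring_scheme" and L :: "'a set set" and I :: "'a set"
  assumes "cring R"
    and "gabriel_filter R L"
    and "ideal I R"
  shows "(totally_sigma_artinian R L (ring_module R) \<longleftrightarrow>
           totally_sigma_artinian R L (ideal_module R I) \<and>
           totally_sigma_artinian R L (quotient_module R I))
       \<and> (totally_sigma_artinian R L (quotient_module R I) \<longleftrightarrow>
           totally_sigma_artinian (R Quot I) (proj_filter R I L) (ring_module (R Quot I)))"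
proof -
  interpret R: cring R by fact
  interpret II: ideal I R by (rule assms(3))
  have GI: "\<And>J. J \<in> L \<Longrightarrow> ideal J R" using assms(2) unfolding gabriel_filter_def by blast
  have GU: "\<And>J K. J \<in> L \<Longrightarrow> ideal K R \<Longrightarrow> J \<subseteq> K \<Longrightarrow> K \<in> L"
    using assms(2) unfolding gabriel_filter_def by blast
  have GT: "\<And>K J. ideal K R \<Longrightarrow> J \<in> L \<Longrightarrow> (\<forall>r\<in>J. colon_ideal R K r \<in> L) \<Longrightarrow> K \<in> L"
    using assms(2) unfolding gabriel_filter_def by blast
  have cQ: "cring (R Quot I)" using ideal.quotient_is_cring[OF assms(3,1)] .
  have hr: "ring_hom_ring R (R Quot I) (a_r_coset R I)" by (rule ideal.rcos_ring_hom_ring[OF assms(3)])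

  have PA: "totally_sigma_artinian R L (ideal_module R I)"
    if T: "totally_sigma_artinian R L (ring_module R)"
    unfolding tsa_iff
  proof (intro allI impI)
    fix N :: "nat \<Rightarrow> 'a set"
    assume c: "(\<forall>n. submodule (N n) R (ideal_module R I)) \<and> (\<forall>n. N (Suc n) \<subseteq> N n)"
    have cc: "(\<forall>n. submodule (N n) R (ring_module R)) \<and> (\<forall>n. N (Suc n) \<subseteq> N n)"
      using c submod_ideal_iff[OF assms(1,3)] submod_ring_iff[OF assms(1)] by blast
    then obtain m h where "h \<in> L" "\<forall>s\<ge>m. \<forall>a\<in>h. \<forall>x\<in>N m. a \<otimes>\<^bsub>R\<^esub> x \<in> N s"
      using T[unfolded tsa_iff, rule_format, OF cc] unfolding smult_ring_module by blast
    then show "\<exists>m. \<exists>h\<in>L. \<forall>s\<ge>m. \<forall>a\<in>h. \<forall>x\<in>N m. a \<odot>\<^bsub>ideal_module R I\<^esub> x \<in> N s"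
      unfolding smult_ideal_module by blast
  qed

  have PB: "totally_sigma_artinian R L (quotient_module R I)"
    if T: "totally_sigma_artinian R L (ring_module R)"
    unfolding tsa_iff
  proof (intro allI impI)
    fix N :: "nat \<Rightarrow> 'a set set"
    assume c: "(\<forall>n. submodule (N n) R (quotient_module R I)) \<and> (\<forall>n. N (Suc n) \<subseteq> N n)"
    have idQ: "\<And>n. ideal (N n) (R Quot I)" using c submod_quot_iff[OF assms(1,3)] by blast
    define P where "P n = {x \<in> carrier R. I +>\<^bsub>R\<^esub> x \<in> N n}" for n
    have idP: "\<And>n. ideal (P n) R" unfolding P_def using ring_hom_ring.ideal_vimage[OF hr idQ] .
    have chP: "\<forall>n. P (Suc n) \<subseteq> P n" unfolding P_def using c by blast
    have cc: "(\<forall>n. submodule (P n) R (ring_module R)) \<and> (\<forall>n. P (Suc n) \<subseteq> P n)"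
      using idP chP submod_ring_iff[OF assms(1)] by blast
    then obtain m h where h: "h \<in> L" and mh: "\<forall>s\<ge>m. \<forall>a\<in>h. \<forall>x\<in>P m. a \<otimes>\<^bsub>R\<^esub> x \<in> P s"
      using T[unfolded tsa_iff, rule_format, OF cc] unfolding smult_ring_module by blast
    show "\<exists>m. \<exists>h\<in>L. \<forall>s\<ge>m. \<forall>a\<in>h. \<forall>x\<in>N m. a \<odot>\<^bsub>quotient_module R I\<^esub> x \<in> N s"
      unfolding smult_quot_module
    proof (intro exI[of _ m] bexI[OF _ h] allI impI ballI)
      fix s a C assume s: "m \<le> s" and a: "a \<in> h" and C: "C \<in> N m"
      have ac: "a \<in> carrier R" using ideal.Icarr[OF GI[OF h] a] .
      have "C \<in> carrier (R Quot I)" using ideal.Icarr[OF idQ C] .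
      then obtain x where x: "x \<in> carrier R" "C = I +>\<^bsub>R\<^esub> x" unfolding Q_carrier by blast
      have "x \<in> P m" unfolding P_def using x C by simp
      then have "a \<otimes>\<^bsub>R\<^esub> x \<in> P s" using mh s a by blast
      then have "I +>\<^bsub>R\<^esub> (a \<otimes>\<^bsub>R\<^esub> x) \<in> N s" unfolding P_def by simp
      then show "(I +>\<^bsub>R\<^esub> a) \<otimes>\<^bsub>(R Quot I)\<^esub> C \<in> N s"
        using Q_mult[OF assms(3) ac x(1)] x(2) by simp
    qed
  qed

  have PC: "totally_sigma_artinian R L (ring_module R)"
    if TI: "totally_sigma_artinian R L (ideal_module R I)"
    and TQ: "totally_sigma_artinian R L (quotient_module R I)"
    unfolding tsa_iff
  proof (intro allI impI)
    fix N :: "nat \<Rightarrow> 'a set"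
    assume c: "(\<forall>n. submodule (N n) R (ring_module R)) \<and> (\<forall>n. N (Suc n) \<subseteq> N n)"
    have idN: "\<And>n. ideal (N n) R" using c submod_ring_iff[OF assms(1)] by blast
    have ch: "\<forall>n. N (Suc n) \<subseteq> N n" using c by blast
    define N1 where "N1 n = N n \<inter> I" for n
    have idN1: "\<And>n. ideal (N1 n) R" unfolding N1_def using R.i_intersect[OF idN assms(3)] .
    have ch1: "\<forall>n. N1 (Suc n) \<subseteq> N1 n" unfolding N1_def using ch by blast
    have cc: "(\<forall>n. submodule (N1 n) R (ideal_module R I)) \<and> (\<forall>n. N1 (Suc n) \<subseteq> N1 n)"
      using idN1 ch1 submod_ideal_iff[OF assms(1,3)] unfolding N1_def by blast
    then obtain m1 h1 where h1: "h1 \<in> L" and m1: "\<forall>s\<ge>m1. \<forall>a\<in>h1. \<forall>x\<in>N1 m1. a \<otimes>\<^bsub>R\<^esub> x \<in> N1 s"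
      using TI[unfolded tsa_iff, rule_format, OF cc] unfolding smult_ideal_module by blast
    define N2 where "N2 n = (\<lambda>x. I +>\<^bsub>R\<^esub> x) ` N n" for n
    have idN2: "\<And>n. ideal (N2 n) (R Quot I)" unfolding N2_def
      using R.ring_ideal_imp_quot_ideal[OF assms(3) idN] .
    have ch2: "\<forall>n. N2 (Suc n) \<subseteq> N2 n" unfolding N2_def using ch by blast
    have cc: "(\<forall>n. submodule (N2 n) R (quotient_module R I)) \<and> (\<forall>n. N2 (Suc n) \<subseteq> N2 n)"
      using idN2 ch2 submod_quot_iff[OF assms(1,3)] by blast
    then obtain m2 h2 where h2: "h2 \<in> L"
      and m2: "\<forall>s\<ge>m2. \<forall>a\<in>h2. \<forall>C\<in>N2 m2. (I +>\<^bsub>R\<^esub> a) \<otimes>\<^bsub>(R Quot I)\<^esub> C \<in> N2 s"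
      using TQ[unfolded tsa_iff, rule_format, OF cc] unfolding smult_quot_module by blast
    define m where "m = max m1 m2"
    define S where "S = {colon_ideal R (N s) x | s x. m \<le> s \<and> x \<in> N m}"
    define K where "K = \<Inter>S"
    have Nc: "\<And>n. N n \<subseteq> carrier R" using ideal.Icarr[OF idN] by blast
    have idK: "ideal K R" unfolding K_def
    proof (rule R.i_Intersect)
      show "\<And>J. J \<in> S \<Longrightarrow> ideal J R" unfolding S_def
        using colon_is_ideal[OF assms(1) idN] Nc by blast
      have "\<zero>\<^bsub>R\<^esub> \<in> N m" using idN[of m] by (simp add: additive_subgroup.zero_closed ideal.axioms(1))
      then show "S \<noteq> {}" unfolding S_def by blast
    qed
    have colL: "colon_ideal R K r \<in> L" if r: "r \<in> h2" for r
    proof -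
      have rc: "r \<in> carrier R" using ideal.Icarr[OF GI[OF h2] r] .
      have "h1 \<subseteq> colon_ideal R K r"
      proof
        fix t assume t: "t \<in> h1"
        have tc: "t \<in> carrier R" using ideal.Icarr[OF GI[OF h1] t] .
        have trc: "t \<otimes>\<^bsub>R\<^esub> r \<in> carrier R" using tc rc by simp
        have "t \<otimes>\<^bsub>R\<^esub> r \<in> W" if W: "W \<in> S" for W
        proof -
          obtain s x where We: "W = colon_ideal R (N s) x" and s: "m \<le> s" and x: "x \<in> N m"
            using W unfolding S_def by blast
          have xc: "x \<in> carrier R" using Nc x by blast
          have "N m \<subseteq> N m2" using chain_le[OF ch] unfolding m_def by simp
          then have "I +>\<^bsub>R\<^esub> x \<in> N2 m2" unfolding N2_def using x by blast
          moreover have "m2 \<le> s" using s unfolding m_def by simp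
          ultimately have "(I +>\<^bsub>R\<^esub> r) \<otimes>\<^bsub>(R Quot I)\<^esub> (I +>\<^bsub>R\<^esub> x) \<in> N2 s"
            using m2 r by blast
          then have "I +>\<^bsub>R\<^esub> (r \<otimes>\<^bsub>R\<^esub> x) \<in> N2 s" using Q_mult[OF assms(3) rc xc] by simp
          then obtain y where y: "y \<in> N s" and ye: "I +>\<^bsub>R\<^esub> (r \<otimes>\<^bsub>R\<^esub> x) = I +>\<^bsub>R\<^esub> y"
            unfolding N2_def by blast
          have yc: "y \<in> carrier R" using Nc y by blast
          have rxc: "r \<otimes>\<^bsub>R\<^esub> x \<in> carrier R" using rc xc by simp
          have "r \<otimes>\<^bsub>R\<^esub> x \<in> I +>\<^bsub>R\<^esub> y" using II.a_rcos_self[OF rxc] ye by simp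
          then obtain i where i: "i \<in> I" and ie: "r \<otimes>\<^bsub>R\<^esub> x = i \<oplus>\<^bsub>R\<^esub> y"
            unfolding a_r_coset_def' by blast
          have ic: "i \<in> carrier R" using ideal.Icarr[OF assms(3) i] .
          have ieq: "i = r \<otimes>\<^bsub>R\<^esub> x \<oplus>\<^bsub>R\<^esub> \<ominus>\<^bsub>R\<^esub> y"
            using ie ic yc by (simp add: R.a_assoc R.r_neg)
          have rxm: "r \<otimes>\<^bsub>R\<^esub> x \<in> N m" using ideal.I_l_closed[OF idN x rc] .
          have "N s \<subseteq> N m" using chain_le[OF ch s] .
          then have ym: "y \<in> N m" using y by blast
          have "r \<otimes>\<^bsub>R\<^esub> x \<oplus>\<^bsub>R\<^esub> \<ominus>\<^bsub>R\<^esub> y \<in> N m"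
            using rxm ym idN[of m]
            by (simp add: additive_subgroup.a_closed additive_subgroup.a_inv_closed ideal.axioms(1))
          then have "i \<in> N m" using ieq by simp
          then have "i \<in> N1 m" unfolding N1_def using i by blast
          moreover have "N1 m \<subseteq> N1 m1" using chain_le[OF ch1] unfolding m_def by simp
          ultimately have "i \<in> N1 m1" by blast
          moreover have "m1 \<le> s" using s unfolding m_def by simp
          ultimately have "t \<otimes>\<^bsub>R\<^esub> i \<in> N1 s" using m1 t by blast
          then have ti: "t \<otimes>\<^bsub>R\<^esub> i \<in> N s" unfolding N1_def by blast
          have ty: "t \<otimes>\<^bsub>R\<^esub> y \<in> N s" using ideal.I_l_closed[OF idN y tc] .
          have "(t \<otimes>\<^bsub>R\<^esub> r) \<otimes>\<^bsub>R\<^esub> x = t \<otimes>\<^bsub>R\<^esub> i \<oplus>\<^bsub>R\<^esub> t \<otimes>\<^bsub>R\<^esub> y"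
            using tc rc xc ic yc ie by (simp add: R.m_assoc R.r_distr)
          moreover have "t \<otimes>\<^bsub>R\<^esub> i \<oplus>\<^bsub>R\<^esub> t \<otimes>\<^bsub>R\<^esub> y \<in> N s"
            using ti ty idN[of s] by (simp add: additive_subgroup.a_closed ideal.axioms(1))
          ultimately show ?thesis unfolding We colon_ideal_def using trc by simp
        qed
        then show "t \<in> colon_ideal R K r" unfolding colon_ideal_def K_def using tc trc by blast
      qed
      then show ?thesis using GU[OF h1 colon_is_ideal[OF assms(1) idK rc]] by blast
    qed
    have KL: "K \<in> L" using GT[OF idK h2] colL by blast
    show "\<exists>m. \<exists>h\<in>L. \<forall>s\<ge>m. \<forall>a\<in>h. \<forall>x\<in>N m. a \<odot>\<^bsub>ring_module R\<^esub> x \<in> N s"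
      unfolding smult_ring_module
    proof (intro exI[of _ m] bexI[OF _ KL] allI impI ballI)
      fix s a x assume s: "m \<le> s" and a: "a \<in> K" and x: "x \<in> N m"
      have "colon_ideal R (N s) x \<in> S" unfolding S_def using s x by blast
      then have "a \<in> colon_ideal R (N s) x" using a unfolding K_def by blast
      then show "a \<otimes>\<^bsub>R\<^esub> x \<in> N s" unfolding colon_ideal_def by blast
    qed
  qed

  have chainQ: "(\<forall>n. submodule (N n) R (quotient_module R I)) \<longleftrightarrow>
                (\<forall>n. submodule (N n) (R Quot I) (ring_module (R Quot I)))" for N :: "nat \<Rightarrow> 'a set set"
    using submod_quot_iff[OF assms(1,3)] submod_ring_iff[OF cQ] by blast

  have PD1: "totally_sigma_artinian (R Quot I) (proj_filter R I L) (ring_module (R Quot I))"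
    if T: "totally_sigma_artinian R L (quotient_module R I)"
    unfolding tsa_iff
  proof (intro allI impI)
    fix N :: "nat \<Rightarrow> 'a set set"
    assume c: "(\<forall>n. submodule (N n) (R Quot I) (ring_module (R Quot I))) \<and> (\<forall>n. N (Suc n) \<subseteq> N n)"
    then have cc: "(\<forall>n. submodule (N n) R (quotient_module R I)) \<and> (\<forall>n. N (Suc n) \<subseteq> N n)"
      using chainQ by blast
    then obtain m h where h: "h \<in> L"
      and mh: "\<forall>s\<ge>m. \<forall>a\<in>h. \<forall>C\<in>N m. (I +>\<^bsub>R\<^esub> a) \<otimes>\<^bsub>(R Quot I)\<^esub> C \<in> N s"
      using T[unfolded tsa_iff, rule_format, OF cc] unfolding smult_quot_module by blast
    define B where "B = (\<lambda>x. I +>\<^bsub>R\<^esub> x) ` h"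
    have idB: "ideal B (R Quot I)" unfolding B_def
      using R.ring_ideal_imp_quot_ideal[OF assms(3) GI[OF h]] .
    have "h \<subseteq> {x \<in> carrier R. I +>\<^bsub>R\<^esub> x \<in> B}"
      unfolding B_def using ideal.Icarr[OF GI[OF h]] by blast
    then have "{x \<in> carrier R. I +>\<^bsub>R\<^esub> x \<in> B} \<in> L"
      using GU[OF h ring_hom_ring.ideal_vimage[OF hr idB]] by blast
    then have BL: "B \<in> proj_filter R I L" unfolding proj_filter_def using idB by blast
    show "\<exists>m. \<exists>h\<in>proj_filter R I L. \<forall>s\<ge>m. \<forall>a\<in>h. \<forall>x\<in>N m. a \<odot>\<^bsub>ring_module (R Quot I)\<^esub> x \<in> N s"
      unfolding smult_ring_module
    proof (intro exI[of _ m] bexI[OF _ BL] allI impI ballI)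
      fix s b C assume s: "m \<le> s" and b: "b \<in> B" and C: "C \<in> N m"
      then obtain a where a: "a \<in> h" and be: "b = I +>\<^bsub>R\<^esub> a" unfolding B_def by blast
      show "b \<otimes>\<^bsub>(R Quot I)\<^esub> C \<in> N s" using mh s a C be by blast
    qed
  qed

  have PD2: "totally_sigma_artinian R L (quotient_module R I)"
    if T: "totally_sigma_artinian (R Quot I) (proj_filter R I L) (ring_module (R Quot I))"
    unfolding tsa_iff
  proof (intro allI impI)
    fix N :: "nat \<Rightarrow> 'a set set"
    assume c: "(\<forall>n. submodule (N n) R (quotient_module R I)) \<and> (\<forall>n. N (Suc n) \<subseteq> N n)"
    then have cc: "(\<forall>n. submodule (N n) (R Quot I) (ring_module (R Quot I))) \<and> (\<forall>n. N (Suc n) \<subseteq> N n)"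
      using chainQ by blast
    then obtain m B where B: "B \<in> proj_filter R I L"
      and mB: "\<forall>s\<ge>m. \<forall>b\<in>B. \<forall>C\<in>N m. b \<otimes>\<^bsub>(R Quot I)\<^esub> C \<in> N s"
      using T[unfolded tsa_iff, rule_format, OF cc] unfolding smult_ring_module by blast
    have hL: "{x \<in> carrier R. I +>\<^bsub>R\<^esub> x \<in> B} \<in> L" using B unfolding proj_filter_def by blast
    show "\<exists>m. \<exists>h\<in>L. \<forall>s\<ge>m. \<forall>a\<in>h. \<forall>x\<in>N m. a \<odot>\<^bsub>quotient_module R I\<^esub> x \<in> N s"
      unfolding smult_quot_module
    proof (intro exI[of _ m] bexI[OF _ hL] allI impI ballI)
      fix s a C assume s: "m \<le> s" and a: "a \<in> {x \<in> carrier R. I +>\<^bsub>R\<^esub> x \<in> B}" and C: "C \<in> N m"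
      then show "(I +>\<^bsub>R\<^esub> a) \<otimes>\<^bsub>(R Quot I)\<^esub> C \<in> N s" using mB by blast
    qed
  qed

  show ?thesis using PA PB PC PD1 PD2 by blast
qed

end
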